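(* Assume the setting and standing assumptions described in the context. For any given $\Delta\in\mathcal{D}$, $\lim_{\kappa\to+\infty}\rho(\Delta,\kappa)=-\infty$.
   Context: Let $n,m\ge 1$, $B\in\mathbb{Z}^{n\times m}$, $C\in\mathbb{Z}^{m\times n}$. Given bounds $0\le \Delta_j^-\le \Delta_j^+<\infty$ ($j=1,\dots,m$), let $\mathcal{D}$ be the set of diagonal matrices $\Delta=\mathrm{diag}(\Delta_1,\dots,\Delta_m)$ with $\Delta_j^-\le\Delta_j\le\Delta_j^+$. Let $J_2,J_4\in\mathbb{R}^{n\times n}$ be symmetric, with $J_2$ indefinite, $J_4$ negative semidefinite, and such that there exists $\bar\kappa$ with $\bar\kappa^2J_2+\bar\kappa^4J_4$ negative definite. Standing assumption: for every $\Delta\in\mathcal{D}$, $B\Delta C$ is singular and has $n-1$ eigenvalues (with multiplicity) with negative real part, and there is a nonzero $v\ge0$ with $v^\top B=0$. For real $\kappa\ge0$, $\rho(\Delta,\kappa)$ denotes the spectral abscissa (maximum real part of the eigenvalues) of $B\Delta C+\kappa^2J_2+\kappa^4J_4$. *)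

theory Defs
  imports "Jordan_Normal_Form.Char_Poly"
begin

definition cmat :: "real mat \<Rightarrow> complex mat" where
  "cmat A = map_mat complex_of_real A"

definition spectral_abscissa :: "real mat \<Rightarrow> real" where
  "spectral_abscissa A = Max (Re ` {z. eigenvalue (cmat A) z})"

definition num_neg_eigs :: "real mat \<Rightarrow> nat" where
  "num_neg_eigs A = (\<Sum>z\<in>{z. poly (char_poly (cmat A)) z = 0 \<and> Re z < 0}. order z (char_poly (cmat A)))"

definition rmat :: "int mat \<Rightarrow> real mat" where
  "rmat A = map_mat real_of_int A"

definition Dset :: "nat \<Rightarrow> (nat \<Rightarrow> real) \<Rightarrow> (nat \<Rightarrow> real) \<Rightarrow> real mat set" where
  "Dset m lo hi = {D. D \<in> carrier_mat m m \<and>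
     (\<forall>i<m. \<forall>j<m. i \<noteq> j \<longrightarrow> D $$ (i,j) = 0) \<and>
     (\<forall>j<m. lo j \<le> D $$ (j,j) \<and> D $$ (j,j) \<le> hi j)}"

definition symmetric_mat :: "real mat \<Rightarrow> bool" where
  "symmetric_mat A \<longleftrightarrow> transpose_mat A = A"

definition indefinite :: "nat \<Rightarrow> real mat \<Rightarrow> bool" where
  "indefinite n A \<longleftrightarrow> (\<exists>x \<in> carrier_vec n. x \<bullet> (A *\<^sub>v x) > 0) \<and>
                        (\<exists>y \<in> carrier_vec n. y \<bullet> (A *\<^sub>v y) < 0)"

definition neg_semidef :: "nat \<Rightarrow> real mat \<Rightarrow> bool" where
  "neg_semidef n A \<longleftrightarrow> (\<forall>x \<in> carrier_vec n. x \<bullet> (A *\<^sub>v x) \<le> 0)"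

definition neg_def :: "nat \<Rightarrow> real mat \<Rightarrow> bool" where
  "neg_def n A \<longleftrightarrow> (\<forall>x \<in> carrier_vec n. x \<noteq> 0\<^sub>v n \<longrightarrow> x \<bullet> (A *\<^sub>v x) < 0)"

definition Mk :: "int mat \<Rightarrow> int mat \<Rightarrow> real mat \<Rightarrow> real mat \<Rightarrow> real mat \<Rightarrow> real \<Rightarrow> real mat" where
  "Mk B C J2 J4 D \<kappa> = rmat B * D * rmat C + (\<kappa>^2) \<cdot>\<^sub>m J2 + (\<kappa>^4) \<cdot>\<^sub>m J4"

end

theory Submission
  imports Defs
begin

lemma bil_expand:
  fixes A :: "'a::comm_ring_1 mat"
  assumes A: "A \<in> carrier_mat n n" and x: "x \<in> carrier_vec n" and y: "y \<in> carrier_vec n"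
  shows "x \<bullet> (A *\<^sub>v y) = (\<Sum>i<n. \<Sum>j<n. A $$ (i,j) * x $ i * y $ j)"
  using A x y by (auto simp: scalar_prod_def row_def sum_distrib_left atLeast0LessThan intro!: sum.cong)

lemma sq_le: "2 * \<bar>a * b\<bar> \<le> a * a + b * (b::real)"
proof -
  have "0 \<le> (\<bar>a\<bar> - \<bar>b\<bar>) * (\<bar>a\<bar> - \<bar>b\<bar>)" by simp
  then show ?thesis by (simp add: algebra_simps abs_mult)
qed

lemma quad_bound:
  fixes A :: "real mat"
  assumes A: "A \<in> carrier_mat n n" and x: "x \<in> carrier_vec n"
  shows "x \<bullet> (A *\<^sub>v x) \<le> (\<Sum>i<n. \<Sum>j<n. \<bar>A $$ (i,j)\<bar>) * (x \<bullet> x)"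
proof -
  have xx: "x \<bullet> x = (\<Sum>k<n. x$k * x$k)" using x by (simp add: scalar_prod_def atLeast0LessThan)
  have sq: "x$i * x$i \<le> x \<bullet> x" if "i < n" for i
    unfolding xx by (rule member_le_sum[where f="\<lambda>k. x$k * x$k"], insert that, auto)
  have "x \<bullet> (A *\<^sub>v x) = (\<Sum>i<n. \<Sum>j<n. A $$ (i,j) * x $ i * x $ j)" by (rule bil_expand[OF A x x])
  also have "\<dots> \<le> (\<Sum>i<n. \<Sum>j<n. \<bar>A $$ (i,j)\<bar> * (x \<bullet> x))"
  proof (intro sum_mono)
    fix i j assume i: "i \<in> {..<n}" and j: "j \<in> {..<n}"
    have "A $$ (i,j) * x $ i * x $ j \<le> \<bar>A $$ (i,j)\<bar> * \<bar>x $ i * x $ j\<bar>"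
      by (metis abs_ge_self abs_mult mult.assoc)
    also have "\<bar>x $ i * x $ j\<bar> \<le> x \<bullet> x"
    proof -
      have "2 * \<bar>x $ i * x $ j\<bar> \<le> x$i * x$i + x$j * x$j" by (rule sq_le)
      then show ?thesis using sq[of i] sq[of j] i j by auto
    qed
    then have "\<bar>A $$ (i,j)\<bar> * \<bar>x $ i * x $ j\<bar> \<le> \<bar>A $$ (i,j)\<bar> * (x \<bullet> x)"
      by (simp add: mult_left_mono)
    finally show "A $$ (i,j) * x $ i * x $ j \<le> \<bar>A $$ (i,j)\<bar> * (x \<bullet> x)" .
  qed
  also have "\<dots> = (\<Sum>i<n. \<Sum>j<n. \<bar>A $$ (i,j)\<bar>) * (x \<bullet> x)"
    by (simp add: sum_distrib_right)
  finally show ?thesis .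
qed

lemma disc:
  fixes a b c :: real
  assumes h: "\<And>t. 0 \<le> a + 2*t*b + t^2*c" and c: "0 \<le> c"
  shows "b^2 \<le> a*c"
proof (cases "c = 0")
  case True
  have "b = 0"
  proof (rule ccontr)
    assume "b \<noteq> 0"
    have "0 \<le> a + 2*(-(a+1)/(2*b))*b" using h[of "-(a+1)/(2*b)"] True by simp
    also have "\<dots> = -1" using \<open>b \<noteq> 0\<close> by (simp add: field_simps)
    finally show False by simp
  qed
  then show ?thesis using True by simp
next
  case False
  then have cp: "c > 0" using c by simp
  have "0 \<le> a + 2*(-b/c)*b + (-b/c)^2*c" by (rule h)
  also have "\<dots> = a - b^2/c" using cp by (simp add: field_simps power2_eq_square)
  finally have "b^2/c \<le> a" by simp
  then show ?thesis using cp by (simp add: field_simps)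
qed

lemma sym_form:
  fixes S :: "real mat"
  assumes S: "S \<in> carrier_mat n n" and sym: "transpose_mat S = S"
    and x: "x \<in> carrier_vec n" and y: "y \<in> carrier_vec n"
  shows "y \<bullet> (S *\<^sub>v x) = x \<bullet> (S *\<^sub>v y)"
proof -
  have "(transpose_mat S *\<^sub>v y) \<bullet> x = y \<bullet> (S *\<^sub>v x)"
    by (rule transpose_vec_mult_scalar[OF S x y])
  then have "(S *\<^sub>v y) \<bullet> x = y \<bullet> (S *\<^sub>v x)" using sym by simp
  moreover have "(S *\<^sub>v y) \<bullet> x = x \<bullet> (S *\<^sub>v y)"
    by (rule comm_scalar_prod[of _ n], insert S y x, auto)
  ultimately show ?thesis by simp
qed

lemma cs_form:
  fixes S :: "real mat"
  assumes S: "S \<in> carrier_mat n n" and sym: "transpose_mat S = S"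
    and psd: "\<And>x. x \<in> carrier_vec n \<Longrightarrow> 0 \<le> x \<bullet> (S *\<^sub>v x)"
    and x: "x \<in> carrier_vec n" and y: "y \<in> carrier_vec n"
  shows "(x \<bullet> (S *\<^sub>v y))^2 \<le> (x \<bullet> (S *\<^sub>v x)) * (y \<bullet> (S *\<^sub>v y))"
proof (rule disc)
  fix t :: real
  let ?w = "x + t \<cdot>\<^sub>v y"
  have w: "?w \<in> carrier_vec n" using x y by auto
  have yx: "y \<bullet> (S *\<^sub>v x) = x \<bullet> (S *\<^sub>v y)" by (rule sym_form[OF S sym x y])
  have "?w \<bullet> (S *\<^sub>v ?w) = (\<Sum>i<n. \<Sum>j<n. S $$ (i,j) * ?w $ i * ?w $ j)" by (rule bil_expand[OF S w w])
  also have "\<dots> = (\<Sum>i<n. \<Sum>j<n. S $$ (i,j) * (x $ i + t * y$i) * (x $ j + t * y $ j))"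
    using x y by (intro sum.cong refl, auto)
  also have "\<dots> = (\<Sum>i<n. \<Sum>j<n. S $$ (i,j) * x $ i * x $ j)
      + t * (\<Sum>i<n. \<Sum>j<n. S $$ (i,j) * x $ i * y $ j)
      + t * (\<Sum>i<n. \<Sum>j<n. S $$ (i,j) * y $ i * x $ j)
      + t^2 * (\<Sum>i<n. \<Sum>j<n. S $$ (i,j) * y $ i * y $ j)"
    by (simp add: algebra_simps sum.distrib sum_distrib_left power2_eq_square)
  also have "\<dots> = x \<bullet> (S *\<^sub>v x) + 2 * t * (x \<bullet> (S *\<^sub>v y)) + t^2 * (y \<bullet> (S *\<^sub>v y))"
    using yx bil_expand[OF S x x] bil_expand[OF S x y] bil_expand[OF S y x] bil_expand[OF S y y]
    by simp
  finally show "0 \<le> x \<bullet> (S *\<^sub>v x) + 2 * t * (x \<bullet> (S *\<^sub>v y)) + t^2 * (y \<bullet> (S *\<^sub>v y))"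
    using psd[OF w] by simp
next
  show "0 \<le> y \<bullet> (S *\<^sub>v y)" by (rule psd[OF y])
qed


lemma sq_div: fixes W q s :: real assumes "W^2 \<le> q * s * W" "0 \<le> W" "0 \<le> q" "0 \<le> s" shows "W \<le> s * q"
proof (cases "W = 0")
  case True then show ?thesis using assms by simp
next
  case False then have "W > 0" using assms by simp
  then show ?thesis using assms(1) by (simp add: power2_eq_square mult.commute mult.left_commute)
qed

lemma posdef_bound:
  fixes S :: "real mat"
  assumes S: "S \<in> carrier_mat n n" and sym: "transpose_mat S = S"
    and pd: "\<And>x. x \<in> carrier_vec n \<Longrightarrow> x \<noteq> 0\<^sub>v n \<Longrightarrow> 0 < x \<bullet> (S *\<^sub>v x)"
  shows "\<exists>c>0. \<forall>x\<in>carrier_vec n. c * (x \<bullet> x) \<le> x \<bullet> (S *\<^sub>v x)"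
proof -
  have psd: "0 \<le> x \<bullet> (S *\<^sub>v x)" if x: "x \<in> carrier_vec n" for x
  proof (cases "x = 0\<^sub>v n")
    case True then show ?thesis using S by simp
  next
    case False then show ?thesis using pd[OF x] by simp
  qed
  have "det S \<noteq> 0"
  proof
    assume "det S = 0"
    then obtain v where v: "v \<in> carrier_vec n" "v \<noteq> 0\<^sub>v n" "S *\<^sub>v v = 0\<^sub>v n"
      using det_0_iff_vec_prod_zero[OF S] by auto
    have "0 < v \<bullet> (S *\<^sub>v v)" by (rule pd[OF v(1) v(2)])
    then show False using v by (simp add: scalar_prod_right_zero)
  qed
  from det_non_zero_imp_unit[OF S this, of "()"]
  obtain T where T: "T \<in> carrier_mat n n" "T * S = 1\<^sub>m n"
    unfolding Units_def ring_mat_def by auto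
  define \<sigma> where "\<sigma> = (\<Sum>i<n. \<Sum>j<n. \<bar>S $$ (i,j)\<bar>)"
  define TT where "TT = transpose_mat T * T"
  have TT: "TT \<in> carrier_mat n n" unfolding TT_def using T by auto
  define \<tau> where "\<tau> = (\<Sum>i<n. \<Sum>j<n. \<bar>TT $$ (i,j)\<bar>)"
  have sg: "0 \<le> \<sigma>" "0 \<le> \<tau>" unfolding \<sigma>_def \<tau>_def by (auto intro!: sum_nonneg)
  have tsp: "0 < \<tau> * \<sigma> + 1" using mult_nonneg_nonneg[OF sg(2) sg(1)] by linarith
  show ?thesis
  proof (intro exI[of _ "1 / (\<tau> * \<sigma> + 1)"] conjI ballI)
    show "0 < 1 / (\<tau> * \<sigma> + 1)" using tsp by simp
    fix x :: "real vec" assume x: "x \<in> carrier_vec n"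
    define w where "w = S *\<^sub>v x"
    have w: "w \<in> carrier_vec n" unfolding w_def using S x by auto
    have q0: "0 \<le> x \<bullet> (S *\<^sub>v x)" by (rule psd[OF x])
    have ww: "x \<bullet> (S *\<^sub>v w) = w \<bullet> w"
      using sym_form[OF S sym x w] unfolding w_def by simp
    have cs: "(x \<bullet> (S *\<^sub>v w))^2 \<le> (x \<bullet> (S *\<^sub>v x)) * (w \<bullet> (S *\<^sub>v w))"
      by (rule cs_form[OF S sym psd x w])
    have "w \<bullet> (S *\<^sub>v w) \<le> \<sigma> * (w \<bullet> w)" unfolding \<sigma>_def by (rule quad_bound[OF S w])
    then have "(x \<bullet> (S *\<^sub>v x)) * (w \<bullet> (S *\<^sub>v w)) \<le> (x \<bullet> (S *\<^sub>v x)) * (\<sigma> * (w \<bullet> w))"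
      using q0 by (rule mult_left_mono)
    with cs ww have "(w \<bullet> w)^2 \<le> (x \<bullet> (S *\<^sub>v x)) * \<sigma> * (w \<bullet> w)" by (simp add: mult.assoc)
    moreover have "0 \<le> w \<bullet> w" using w by (simp add: scalar_prod_def sum_nonneg)
    ultimately have w1: "w \<bullet> w \<le> \<sigma> * (x \<bullet> (S *\<^sub>v x))" by (rule sq_div, insert q0 sg, auto)
    have Tw: "T *\<^sub>v w \<in> carrier_vec n" using T(1) w by simp
    have Tt: "transpose_mat T \<in> carrier_mat n n" using T(1) by simp
    have xT: "x = T *\<^sub>v w"
    proof -
      have "(T * S) *\<^sub>v x = T *\<^sub>v w" unfolding w_def by (rule assoc_mult_mat_vec[OF T(1) S x])
      then show ?thesis using one_mult_mat_vec[OF x] T(2) by simp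
    qed
    have "x \<bullet> x = (T *\<^sub>v w) \<bullet> (T *\<^sub>v w)" using xT by simp
    also have "\<dots> = (transpose_mat T *\<^sub>v (T *\<^sub>v w)) \<bullet> w"
      by (rule transpose_vec_mult_scalar[OF T(1) w Tw, symmetric])
    also have "\<dots> = w \<bullet> (transpose_mat T *\<^sub>v (T *\<^sub>v w))"
      by (rule comm_scalar_prod[of _ n], insert Tt Tw w, auto)
    also have "\<dots> = w \<bullet> (TT *\<^sub>v w)" unfolding TT_def
      by (subst assoc_mult_mat_vec[OF Tt T(1) w], rule refl)
    also have "\<dots> \<le> \<tau> * (w \<bullet> w)" unfolding \<tau>_def by (rule quad_bound[OF TT w])
    also have "\<dots> \<le> \<tau> * (\<sigma> * (x \<bullet> (S *\<^sub>v x)))" using w1 sg by (simp add: mult_left_mono)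
    also have "\<dots> \<le> (\<tau> * \<sigma> + 1) * (x \<bullet> (S *\<^sub>v x))" using q0 by (simp add: algebra_simps)
    finally have "x \<bullet> x \<le> (\<tau> * \<sigma> + 1) * (x \<bullet> (S *\<^sub>v x))" .
    then show "1 / (\<tau> * \<sigma> + 1) * (x \<bullet> x) \<le> x \<bullet> (S *\<^sub>v x)"
      using tsp by (simp add: field_simps)
  qed
qed


lemma eig_re:
  fixes M :: "real mat" and z :: "complex vec"
  assumes M: "M \<in> carrier_mat n n" and z: "z \<in> carrier_vec n"
    and ev: "cmat M *\<^sub>v z = l \<cdot>\<^sub>v z"
  shows "Re l * (\<Sum>i<n. Re (z$i) * Re (z$i) + Im (z$i) * Im (z$i)) =
    (\<Sum>i<n. \<Sum>j<n. M $$ (i,j) * Re (z$i) * Re (z$j)) + (\<Sum>i<n. \<Sum>j<n. M $$ (i,j) * Im (z$i) * Im (z$j))"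
proof -
  have e: "(\<Sum>j<n. complex_of_real (M $$ (i,j)) * z$j) = l * z$i" if i: "i < n" for i
  proof -
    have "(cmat M *\<^sub>v z) $ i = (l \<cdot>\<^sub>v z) $ i" using ev by simp
    then show ?thesis using i M z
      by (simp add: cmat_def scalar_prod_def row_def atLeast0LessThan)
  qed
  have "(\<Sum>i<n. cnj (z$i) * (\<Sum>j<n. complex_of_real (M $$ (i,j)) * z$j)) = (\<Sum>i<n. cnj (z$i) * (l * z$i))"
    using e by simp
  then have "Re (\<Sum>i<n. cnj (z$i) * (\<Sum>j<n. complex_of_real (M $$ (i,j)) * z$j)) = Re (\<Sum>i<n. cnj (z$i) * (l * z$i))"
    by simp
  moreover have "Re (\<Sum>i<n. cnj (z$i) * (\<Sum>j<n. complex_of_real (M $$ (i,j)) * z$j)) =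
    (\<Sum>i<n. \<Sum>j<n. M $$ (i,j) * Re (z$i) * Re (z$j)) + (\<Sum>i<n. \<Sum>j<n. M $$ (i,j) * Im (z$i) * Im (z$j))"
    by (simp add: sum_distrib_left sum.distrib[symmetric] algebra_simps)
  moreover have "Re (\<Sum>i<n. cnj (z$i) * (l * z$i)) = Re l * (\<Sum>i<n. Re (z$i) * Re (z$i) + Im (z$i) * Im (z$i))"
    by (simp add: sum_distrib_left algebra_simps)
  ultimately show ?thesis by simp
qed


lemma qexp3:
  fixes A J2 J4 :: "real mat"
  assumes A: "A \<in> carrier_mat n n" and J2: "J2 \<in> carrier_mat n n" and J4: "J4 \<in> carrier_mat n n"
    and x: "x \<in> carrier_vec n"
  shows "x \<bullet> ((A + a \<cdot>\<^sub>m J2 + b \<cdot>\<^sub>m J4) *\<^sub>v x) = x \<bullet> (A *\<^sub>v x) + a * (x \<bullet> (J2 *\<^sub>v x)) + b * (x \<bullet> (J4 *\<^sub>v x))"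
proof -
  have C: "A + a \<cdot>\<^sub>m J2 + b \<cdot>\<^sub>m J4 \<in> carrier_mat n n" using A J2 J4 by auto
  have "x \<bullet> ((A + a \<cdot>\<^sub>m J2 + b \<cdot>\<^sub>m J4) *\<^sub>v x) = (\<Sum>i<n. \<Sum>j<n. (A + a \<cdot>\<^sub>m J2 + b \<cdot>\<^sub>m J4) $$ (i,j) * x $ i * x $ j)"
    by (rule bil_expand[OF C x x])
  also have "\<dots> = (\<Sum>i<n. \<Sum>j<n. (A $$ (i,j) + a * J2 $$ (i,j) + b * J4 $$ (i,j)) * x $ i * x $ j)"
    using A J2 J4 by (intro sum.cong refl) auto
  also have "\<dots> = (\<Sum>i<n. \<Sum>j<n. A $$ (i,j) * x $ i * x $ j) + a * (\<Sum>i<n. \<Sum>j<n. J2 $$ (i,j) * x $ i * x $ j)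
     + b * (\<Sum>i<n. \<Sum>j<n. J4 $$ (i,j) * x $ i * x $ j)"
    by (simp add: algebra_simps sum.distrib sum_distrib_left)
  finally show ?thesis using bil_expand[OF A x x] bil_expand[OF J2 x x] bil_expand[OF J4 x x] by simp
qed

lemma qexp2:
  fixes J2 J4 :: "real mat"
  assumes J2: "J2 \<in> carrier_mat n n" and J4: "J4 \<in> carrier_mat n n"
    and x: "x \<in> carrier_vec n"
  shows "x \<bullet> ((a \<cdot>\<^sub>m J2 + b \<cdot>\<^sub>m J4) *\<^sub>v x) = a * (x \<bullet> (J2 *\<^sub>v x)) + b * (x \<bullet> (J4 *\<^sub>v x))"
proof -
  have C: "a \<cdot>\<^sub>m J2 + b \<cdot>\<^sub>m J4 \<in> carrier_mat n n" using J2 J4 by auto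
  have "x \<bullet> ((a \<cdot>\<^sub>m J2 + b \<cdot>\<^sub>m J4) *\<^sub>v x) = (\<Sum>i<n. \<Sum>j<n. (a \<cdot>\<^sub>m J2 + b \<cdot>\<^sub>m J4) $$ (i,j) * x $ i * x $ j)"
    by (rule bil_expand[OF C x x])
  also have "\<dots> = (\<Sum>i<n. \<Sum>j<n. (a * J2 $$ (i,j) + b * J4 $$ (i,j)) * x $ i * x $ j)"
    using J2 J4 by (intro sum.cong refl) auto
  also have "\<dots> = a * (\<Sum>i<n. \<Sum>j<n. J2 $$ (i,j) * x $ i * x $ j)
     + b * (\<Sum>i<n. \<Sum>j<n. J4 $$ (i,j) * x $ i * x $ j)"
    by (simp add: algebra_simps sum.distrib sum_distrib_left)
  finally show ?thesis using bil_expand[OF J2 x x] bil_expand[OF J4 x x] by simp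
qed

lemma sym_entry:
  fixes J :: "real mat"
  assumes J: "J \<in> carrier_mat n n" and s: "symmetric_mat J" and i: "i < n" and j: "j < n"
  shows "J $$ (j,i) = J $$ (i,j)"
proof -
  have "transpose_mat J $$ (i,j) = J $$ (i,j)" using s unfolding symmetric_mat_def by simp
  then show ?thesis using J i j by simp
qed

lemma arith_key:
  fixes b k j2 j4 c xx :: real
  assumes b: "0 < b" and k: "b \<le> k" and j4: "j4 \<le> 0"
    and h: "b * j2 + b^2 * j4 \<le> - c * xx"
  shows "k * j2 + k^2 * j4 \<le> - (k * c / b) * xx"
proof -
  have kp: "0 < k / b" using b k by simp
  have "k / b * (b * j2 + b^2 * j4) \<le> k / b * (- c * xx)"
    by (rule mult_left_mono[OF h]) (use kp in simp)
  moreover have "k / b * (b * j2 + b^2 * j4) = k * j2 + k * b * j4" using b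
    by (simp add: field_simps power2_eq_square)
  moreover have "k / b * (- c * xx) = - (k * c / b) * xx" by simp
  ultimately have 1: "k * j2 + k * b * j4 \<le> - (k * c / b) * xx" by simp
  have "k * b \<le> k * k" using k b by (simp add: mult_left_mono)
  then have 2: "k * k * j4 \<le> k * b * j4" using j4 by (simp add: mult_right_mono_neg)
  show ?thesis using 1 2 by (simp add: power2_eq_square)
qed

lemma cpos: "(w::complex) \<noteq> 0 \<Longrightarrow> 0 < Re w * Re w + Im w * Im w"
  by (simp add: sum_squares_gt_zero_iff complex_eq_iff)

lemma eig_bound:
  fixes M :: "real mat"
  assumes M: "M \<in> carrier_mat n n"
    and qb: "\<And>x. x \<in> carrier_vec n \<Longrightarrow> x \<bullet> (M *\<^sub>v x) \<le> \<beta> * (x \<bullet> x)"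
    and ev: "eigenvalue (cmat M) l"
  shows "Re l \<le> \<beta>"
proof -
  from ev obtain z where z: "z \<in> carrier_vec n" "z \<noteq> 0\<^sub>v n" "cmat M *\<^sub>v z = l \<cdot>\<^sub>v z"
    unfolding eigenvalue_def eigenvector_def using M by (auto simp: cmat_def)
  define u where "u = vec n (\<lambda>i. Re (z$i))"
  define v where "v = vec n (\<lambda>i. Im (z$i))"
  have u: "u \<in> carrier_vec n" and v: "v \<in> carrier_vec n" unfolding u_def v_def by auto
  have uu: "u \<bullet> u = (\<Sum>i<n. Re (z$i) * Re (z$i))" unfolding u_def by (simp add: scalar_prod_def atLeast0LessThan)
  have vv: "v \<bullet> v = (\<Sum>i<n. Im (z$i) * Im (z$i))" unfolding v_def by (simp add: scalar_prod_def atLeast0LessThan)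
  have uM: "u \<bullet> (M *\<^sub>v u) = (\<Sum>i<n. \<Sum>j<n. M $$ (i,j) * Re (z$i) * Re (z$j))"
    unfolding bil_expand[OF M u u] unfolding u_def by (intro sum.cong refl) auto
  have vM: "v \<bullet> (M *\<^sub>v v) = (\<Sum>i<n. \<Sum>j<n. M $$ (i,j) * Im (z$i) * Im (z$j))"
    unfolding bil_expand[OF M v v] unfolding v_def by (intro sum.cong refl) auto
  define W where "W = (\<Sum>i<n. Re (z$i) * Re (z$i) + Im (z$i) * Im (z$i))"
  have WW: "W = u \<bullet> u + v \<bullet> v" unfolding W_def uu vv by (simp add: sum.distrib)
  have "Re l * W = u \<bullet> (M *\<^sub>v u) + v \<bullet> (M *\<^sub>v v)"
    unfolding W_def uM vM by (rule eig_re[OF M z(1) z(3)])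
  also have "\<dots> \<le> \<beta> * (u \<bullet> u) + \<beta> * (v \<bullet> v)" using qb[OF u] qb[OF v] by simp
  also have "\<dots> = \<beta> * W" unfolding WW by (simp add: algebra_simps)
  finally have le: "Re l * W \<le> \<beta> * W" .
  obtain i where i: "i < n" "z $ i \<noteq> 0"
  proof (rule ccontr)
    assume "\<not> thesis"
    with that have "\<forall>i<n. z $ i = 0" by blast
    then have "z = 0\<^sub>v n" using z(1) by (intro eq_vecI) auto
    with z(2) show False by simp
  qed
  have "0 < Re (z$i) * Re (z$i) + Im (z$i) * Im (z$i)" by (rule cpos[OF i(2)])
  also have "\<dots> \<le> W" unfolding W_def
    by (rule member_le_sum[where f="\<lambda>i. Re (z$i) * Re (z$i) + Im (z$i) * Im (z$i)"], insert i, auto)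
  finally have "0 < W" .
  with le show ?thesis by simp
qed

lemma sa_bound:
  fixes M :: "real mat"
  assumes M: "M \<in> carrier_mat n n" and n: "0 < n"
    and qb: "\<And>x. x \<in> carrier_vec n \<Longrightarrow> x \<bullet> (M *\<^sub>v x) \<le> \<beta> * (x \<bullet> x)"
  shows "spectral_abscissa M \<le> \<beta>"
proof -
  have cM: "cmat M \<in> carrier_mat n n" using M unfolding cmat_def by simp
  have id: "{z. eigenvalue (cmat M) z} = {z. poly (char_poly (cmat M)) z = 0}"
    using eigenvalue_root_char_poly[OF cM] by simp
  have dm: "degree (char_poly (cmat M)) = n \<and> coeff (char_poly (cmat M)) n = 1"
    by (rule degree_monic_char_poly[OF cM])
  then have nz: "char_poly (cmat M) \<noteq> 0" by auto
  have fin: "finite {z. eigenvalue (cmat M) z}" unfolding id by (rule poly_roots_finite[OF nz])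
  have "\<not> constant (poly (char_poly (cmat M)))" using dm n by (simp add: constant_degree)
  then obtain z where "poly (char_poly (cmat M)) z = 0" using fundamental_theorem_of_algebra by blast
  then have ne: "{z. eigenvalue (cmat M) z} \<noteq> {}" unfolding id by auto
  show ?thesis unfolding spectral_abscissa_def
    using fin ne eig_bound[OF M qb] by (subst Max_le_iff) auto
qed

theorem lemma1:
  fixes n m :: nat and B C :: "int mat" and lo hi :: "nat \<Rightarrow> real"
    and J2 J4 :: "real mat" and \<Delta> :: "real mat"
  assumes "n \<ge> 1" and "m \<ge> 1"
    and "B \<in> carrier_mat n m" and "C \<in> carrier_mat m n"
    and "\<forall>j<m. 0 \<le> lo j \<and> lo j \<le> hi j"
    and "J2 \<in> carrier_mat n n" and "J4 \<in> carrier_mat n n"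
    and "symmetric_mat J2" and "symmetric_mat J4"
    and "indefinite n J2" and "neg_semidef n J4"
    and "\<exists>\<kappa>b::real. neg_def n (\<kappa>b^2 \<cdot>\<^sub>m J2 + \<kappa>b^4 \<cdot>\<^sub>m J4)"
    and "\<forall>D \<in> Dset m lo hi. det (rmat B * D * rmat C) = 0 \<and>
            num_neg_eigs (rmat B * D * rmat C) = n - 1"
    and "\<exists>v \<in> carrier_vec n. v \<noteq> 0\<^sub>v n \<and> (\<forall>i<n. v $ i \<ge> 0) \<and>
            transpose_mat (rmat B) *\<^sub>v v = 0\<^sub>v m"
    and "\<Delta> \<in> Dset m lo hi"
  shows "filterlim (\<lambda>\<kappa>. spectral_abscissa (Mk B C J2 J4 \<Delta> \<kappa>)) at_bot at_top"
proof -
  note asm = assms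
  have Dc: "\<Delta> \<in> carrier_mat m m" using asm(15) unfolding Dset_def by auto
  define A where "A = rmat B * \<Delta> * rmat C"
  have A: "A \<in> carrier_mat n n" unfolding A_def rmat_def using asm(3,4) Dc by auto
  have J2: "J2 \<in> carrier_mat n n" and J4: "J4 \<in> carrier_mat n n" using asm(6,7) by auto
  obtain kb :: real where nd: "neg_def n (kb^2 \<cdot>\<^sub>m J2 + kb^4 \<cdot>\<^sub>m J4)" using asm(12) by auto
  have nsd: "x \<bullet> (J4 *\<^sub>v x) \<le> 0" if "x \<in> carrier_vec n" for x
    using asm(11) that unfolding neg_semidef_def by auto
  have n0: "0 < n" using asm(1) by simp
  have kb0: "kb \<noteq> 0"
  proof
    assume "kb = 0"
    define e :: "real vec" where "e = unit_vec n 0"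
    have e: "e \<in> carrier_vec n" "e \<noteq> 0\<^sub>v n" unfolding e_def using n0
      by (auto simp: vec_eq_iff)
    have "e \<bullet> ((kb^2 \<cdot>\<^sub>m J2 + kb^4 \<cdot>\<^sub>m J4) *\<^sub>v e) < 0" using nd e unfolding neg_def_def by auto
    moreover have "e \<bullet> ((kb^2 \<cdot>\<^sub>m J2 + kb^4 \<cdot>\<^sub>m J4) *\<^sub>v e) = 0"
      using qexp2[OF J2 J4 e(1)] \<open>kb = 0\<close> by simp
    ultimately show False by simp
  qed
  define S where "S = (-(kb^2)) \<cdot>\<^sub>m J2 + (-(kb^4)) \<cdot>\<^sub>m J4"
  have S: "S \<in> carrier_mat n n" unfolding S_def using J2 J4 by auto
  have Ssym: "transpose_mat S = S"
  proof (rule eq_matI)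
    fix i j assume i: "i < dim_row S" and j: "j < dim_col S"
    then have i': "i < n" and j': "j < n" using S by auto
    show "transpose_mat S $$ (i, j) = S $$ (i, j)"
      using i' j' J2 J4 sym_entry[OF J2 asm(8) i' j'] sym_entry[OF J4 asm(9) i' j']
      unfolding S_def by simp
  qed (use S in auto)
  have Sq: "x \<bullet> (S *\<^sub>v x) = - (x \<bullet> ((kb^2 \<cdot>\<^sub>m J2 + kb^4 \<cdot>\<^sub>m J4) *\<^sub>v x))" if x: "x \<in> carrier_vec n" for x
    unfolding S_def qexp2[OF J2 J4 x] by simp
  have Spd: "0 < x \<bullet> (S *\<^sub>v x)" if "x \<in> carrier_vec n" "x \<noteq> 0\<^sub>v n" for x
    using nd that Sq[OF that(1)] unfolding neg_def_def by auto
  obtain c where c: "c > 0" and cb: "\<And>x. x \<in> carrier_vec n \<Longrightarrow> c * (x \<bullet> x) \<le> x \<bullet> (S *\<^sub>v x)"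
    using posdef_bound[OF S Ssym Spd] by blast
  define b where "b = kb^2"
  have b: "0 < b" unfolding b_def using kb0 by simp
  define \<alpha> where "\<alpha> = (\<Sum>i<n. \<Sum>j<n. \<bar>A $$ (i,j)\<bar>)"
  have Mk: "Mk B C J2 J4 \<Delta> \<kappa> = A + (\<kappa>^2) \<cdot>\<^sub>m J2 + (\<kappa>^2)^2 \<cdot>\<^sub>m J4" for \<kappa>
    unfolding Mk_def A_def by (simp add: power_mult[symmetric])
  have MkC: "Mk B C J2 J4 \<Delta> \<kappa> \<in> carrier_mat n n" for \<kappa> unfolding Mk using A J2 J4 by auto
  have qbound: "x \<bullet> (Mk B C J2 J4 \<Delta> \<kappa> *\<^sub>v x) \<le> (\<alpha> - \<kappa>^2 * c / b) * (x \<bullet> x)"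
    if k: "b \<le> \<kappa>^2" and x: "x \<in> carrier_vec n" for \<kappa> x
  proof -
    have h: "b * (x \<bullet> (J2 *\<^sub>v x)) + b^2 * (x \<bullet> (J4 *\<^sub>v x)) \<le> - c * (x \<bullet> x)"
      using cb[OF x] Sq[OF x] qexp2[OF J2 J4 x, of "kb^2" "kb^4"] unfolding b_def
      by (simp add: power_mult[symmetric])
    have key: "\<kappa>^2 * (x \<bullet> (J2 *\<^sub>v x)) + (\<kappa>^2)^2 * (x \<bullet> (J4 *\<^sub>v x)) \<le> - (\<kappa>^2 * c / b) * (x \<bullet> x)"
      by (rule arith_key[OF b k nsd[OF x] h])
    have "x \<bullet> (Mk B C J2 J4 \<Delta> \<kappa> *\<^sub>v x) = x \<bullet> (A *\<^sub>v x) + \<kappa>^2 * (x \<bullet> (J2 *\<^sub>v x)) + (\<kappa>^2)^2 * (x \<bullet> (J4 *\<^sub>v x))"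
      unfolding Mk by (rule qexp3[OF A J2 J4 x])
    also have "\<dots> \<le> \<alpha> * (x \<bullet> x) - (\<kappa>^2 * c / b) * (x \<bullet> x)"
      using key quad_bound[OF A x] unfolding \<alpha>_def by linarith
    finally show ?thesis by (simp add: algebra_simps)
  qed
  have sab: "spectral_abscissa (Mk B C J2 J4 \<Delta> \<kappa>) \<le> \<alpha> - \<kappa>^2 * c / b" if k: "b \<le> \<kappa>^2" for \<kappa>
    by (rule sa_bound[OF MkC n0 qbound[OF k]])
  show ?thesis unfolding filterlim_at_bot
  proof
    fix Z :: real
    define K where "K = max \<bar>kb\<bar> (max 1 (\<bar>\<alpha> - Z\<bar> * b / c))"
    show "eventually (\<lambda>\<kappa>. spectral_abscissa (Mk B C J2 J4 \<Delta> \<kappa>) \<le> Z) at_top"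
      using eventually_ge_at_top[of K]
    proof eventually_elim
      case (elim \<kappa>)
      have k1: "\<bar>kb\<bar> \<le> \<kappa>" "1 \<le> \<kappa>" "\<bar>\<alpha> - Z\<bar> * b / c \<le> \<kappa>" using elim unfolding K_def by auto
      have "kb^2 \<le> \<kappa>^2" using k1(1) by (metis abs_ge_zero power2_abs power_mono)
      then have kb: "b \<le> \<kappa>^2" unfolding b_def .
      have "\<kappa> \<le> \<kappa>^2" using k1(2) by (simp add: power2_eq_square)
      then have "\<bar>\<alpha> - Z\<bar> * b / c \<le> \<kappa>^2" using k1(3) by linarith
      then have "\<bar>\<alpha> - Z\<bar> \<le> \<kappa>^2 * c / b" using b c by (simp add: field_simps)
      then have "\<alpha> - \<kappa>^2 * c / b \<le> Z" by linarith
      then show ?case using sab[OF kb] by linarith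
    qed
  qed
qed

end
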